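(* Let $\mathcal{G}=(\mathcal{V},\mathcal{E})$ and $\mathcal{G}'=(\mathcal{V}',\mathcal{E}')$ be finite graphs with no isolated vertices such that $\min\{|\mathcal{V}|,|\mathcal{V}'|\}\ge4$. Then $\mathcal{G}$ is contained in $\mathcal{G}'$ if and only if $D(\mathcal{G})\le D(\mathcal{G}')$.
   Context: $\mathcal{G}$ is contained in $\mathcal{G}'$ if $\mathcal{G}$ is isomorphic to a subgraph of $\mathcal{G}'$ (a subgraph $(\mathcal{V}_0,\mathcal{E}_0)$ having $\mathcal{V}_0\subseteq\mathcal{V}'$, $\mathcal{E}_0\subseteq\mathcal{E}'$). An abstract storage device (ASD) is a pair $D=(\mathcal{S}_D,\mathcal{P}_D)$, $\mathcal{S}_D$ a finite set and $\mathcal{P}_D$ a finite family of partitions of $\mathcal{S}_D$. For a partition $\pi$ of $\mathcal{S}'$ and $\phi:\mathcal{S}\to\mathcal{S}'$, $\pi\circ\phi$ is the partition of $\mathcal{S}$ with $x,y$ in the same block iff $\phi(x),\phi(y)$ are in the same block of $\pi$; $\pi\preceq\rho$ means every block of $\pi$ lies in a block of $\rho$. $D\le D'$ means there exist $\phi:\mathcal{S}_D\to\mathcal{S}_{D'}$, $\alpha:\mathcal{P}_D\to\mathcal{P}_{D'}$ with $\alpha(\pi)\circ\phi\preceq\pi$ for all $\pi\in\mathcal{P}_D$. The graph device $D(\mathcal{G})$ has state space $\mathcal{V}$ and partition set $\{\pi_e:e\in\mathcal{E}\}$, where for $e=\{u,v\}$, $\pi_e=\{\{u\},\{v\},\mathcal{V}\setminus\{u,v\}\}$.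 *)

theory Defs
  imports "HOL-Library.Disjoint_Sets"
begin

definition fin_graph :: "'a set \<Rightarrow> 'a set set \<Rightarrow> bool" where
  "fin_graph V E \<longleftrightarrow> finite V \<and>
     (\<forall>e\<in>E. \<exists>u v. e = {u, v} \<and> u \<noteq> v \<and> u \<in> V \<and> v \<in> V)"

definition no_isolated :: "'a set \<Rightarrow> 'a set set \<Rightarrow> bool" where
  "no_isolated V E \<longleftrightarrow> (\<forall>v\<in>V. \<exists>e\<in>E. v \<in> e)"

definition graph_iso :: "'a set \<Rightarrow> 'a set set \<Rightarrow> 'b set \<Rightarrow> 'b set set \<Rightarrow> bool" where
  "graph_iso V E W F \<longleftrightarrow> (\<exists>f. bij_betw f V W \<and>
     (\<forall>u\<in>V. \<forall>v\<in>V. {u, v} \<in> E \<longleftrightarrow> {f u, f v} \<in> F))"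

definition graph_contained :: "'a set \<Rightarrow> 'a set set \<Rightarrow> 'b set \<Rightarrow> 'b set set \<Rightarrow> bool" where
  "graph_contained V E V' E' \<longleftrightarrow> (\<exists>V0 E0. V0 \<subseteq> V' \<and> E0 \<subseteq> E' \<and> fin_graph V0 E0 \<and>
     graph_iso V E V0 E0)"

text \<open>Abstract storage devices: a state set and a family of partitions of it.\<close>
type_synonym 'a asd = "'a set \<times> 'a set set set"

definition is_asd :: "'a asd \<Rightarrow> bool" where
  "is_asd D \<longleftrightarrow> finite (fst D) \<and> finite (snd D) \<and> (\<forall>\<pi>\<in>snd D. partition_on (fst D) \<pi>)"

definition same_block :: "'a set set \<Rightarrow> 'a \<Rightarrow> 'a \<Rightarrow> bool" where
  "same_block P x y \<longleftrightarrow> (\<exists>B\<in>P. x \<in> B \<and> y \<in> B)"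

definition pullback :: "'b set set \<Rightarrow> ('a \<Rightarrow> 'b) \<Rightarrow> 'a set \<Rightarrow> 'a set set" where
  "pullback P \<phi> S = (\<lambda>x. {y\<in>S. same_block P (\<phi> x) (\<phi> y)}) ` S"

definition refines :: "'a set set \<Rightarrow> 'a set set \<Rightarrow> bool" where
  "refines P Q \<longleftrightarrow> (\<forall>B\<in>P. \<exists>C\<in>Q. B \<subseteq> C)"

definition asd_le :: "'a asd \<Rightarrow> 'b asd \<Rightarrow> bool" where
  "asd_le D D' \<longleftrightarrow> (\<exists>\<phi> \<alpha>. \<phi> \<in> fst D \<rightarrow> fst D' \<and> \<alpha> \<in> snd D \<rightarrow> snd D' \<and>
     (\<forall>\<pi>\<in>snd D. refines (pullback (\<alpha> \<pi>) \<phi> (fst D)) \<pi>))"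

definition edge_partition :: "'a set \<Rightarrow> 'a set \<Rightarrow> 'a set set" where
  "edge_partition V e = ((\<lambda>u. {u}) ` e \<union> {V - e}) - {{}}"

definition graph_device :: "'a set \<Rightarrow> 'a set set \<Rightarrow> 'a asd" where
  "graph_device V E = (V, edge_partition V ` E)"

end

theory Submission
  imports Defs
begin

lemma edge_sub: "fin_graph V E \<Longrightarrow> e \<in> E \<Longrightarrow> e \<subseteq> V"
  unfolding fin_graph_def by fastforce

lemma edge_form: "fin_graph V E \<Longrightarrow> e \<in> E \<Longrightarrow> \<exists>u v. e = {u,v} \<and> u \<noteq> v \<and> u \<in> V \<and> v \<in> V"
  unfolding fin_graph_def by blast

lemma sb_sym: "same_block P x y \<Longrightarrow> same_block P y x"
  unfolding same_block_def by blast

lemma sb_refl: "p \<in> W \<Longrightarrow> same_block (edge_partition W e) p p"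
  unfolding same_block_def edge_partition_def
  by (cases "p \<in> e") auto

lemma sb_in_edge: "same_block (edge_partition W e) p q \<Longrightarrow> p \<in> e \<Longrightarrow> q = p"
  unfolding same_block_def edge_partition_def by auto

lemma sb_out: "p \<in> W \<Longrightarrow> q \<in> W \<Longrightarrow> p \<notin> e \<Longrightarrow> q \<notin> e \<Longrightarrow> same_block (edge_partition W e) p q"
  unfolding same_block_def edge_partition_def by auto

lemma block_in_edge: "B \<in> edge_partition W e \<Longrightarrow> x \<in> e \<Longrightarrow> x \<in> B \<Longrightarrow> B = {x}"
  unfolding edge_partition_def by auto

lemma refines_pb:
  assumes "refines (pullback P \<phi> V) \<pi>" "x \<in> V"
  shows "\<exists>B\<in>\<pi>. {y\<in>V. same_block P (\<phi> x) (\<phi> y)} \<subseteq> B"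
  using assms unfolding refines_def pullback_def by auto

lemma key:
  assumes phi: "\<phi> \<in> V \<rightarrow> V'"
    and alpha: "\<alpha> \<in> edge_partition V ` E \<rightarrow> edge_partition V' ` E'"
    and ref: "\<forall>\<pi>\<in>edge_partition V ` E. refines (pullback (\<alpha> \<pi>) \<phi> V) \<pi>"
    and e: "e \<in> E" and x: "x \<in> e" "x \<in> V" and y: "y \<in> V"
    and sb: "same_block (\<alpha> (edge_partition V e)) (\<phi> x) (\<phi> y)"
  shows "y = x"
proof -
  obtain e' where e': "e' \<in> E'" "\<alpha> (edge_partition V e) = edge_partition V' e'"
    using alpha e by blast
  obtain B where B: "B \<in> edge_partition V e"
    "{z\<in>V. same_block (\<alpha> (edge_partition V e)) (\<phi> x) (\<phi> z)} \<subseteq> B"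
    using refines_pb[OF ref[rule_format] x(2)] e by blast
  have "\<phi> x \<in> V'" using phi x by auto
  hence "x \<in> B" using B(2) x e' sb_refl by fastforce
  hence "B = {x}" using block_in_edge[OF B(1) x(1)] by simp
  moreover have "y \<in> B" using B(2) y sb by auto
  ultimately show ?thesis by simp
qed

theorem lemma3:
  fixes V :: "'a set" and E :: "'a set set" and V' :: "'b set" and E' :: "'b set set"
  assumes "fin_graph V E" and "fin_graph V' E'"
    and "no_isolated V E" and "no_isolated V' E'"
    and "min (card V) (card V') \<ge> 4"
  shows "graph_contained V E V' E' \<longleftrightarrow> asd_le (graph_device V E) (graph_device V' E')"
proof
  assume "graph_contained V E V' E'"
  then obtain V0 E0 where V0: "V0 \<subseteq> V'" "E0 \<subseteq> E'" "fin_graph V0 E0"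
    and gi: "graph_iso V E V0 E0"
    unfolding graph_contained_def by blast
  from gi obtain f where bij: "bij_betw f V V0" 
    and iff: "\<forall>u\<in>V. \<forall>v\<in>V. {u, v} \<in> E \<longleftrightarrow> {f u, f v} \<in> E0"
    unfolding graph_iso_def by blast
  have inj: "inj_on f V" using bij by (simp add: bij_betw_def)
  have fV: "f x \<in> V'" if "x \<in> V" for x using bij_betw_apply[OF bij that] V0(1) by blast
  have fE: "f ` e \<in> E'" if eE: "e \<in> E" for e
  proof -
    obtain u v where uv: "e = {u,v}" "u \<in> V" "v \<in> V"
      using edge_form[OF assms(1) eE] by blast
    have "{f u, f v} \<in> E0" using iff[rule_format, OF uv(2,3)] eE uv(1) by simp
    moreover have "f ` e = {f u, f v}" using uv(1) by simp
    ultimately show ?thesis using V0(2) by auto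
  qed
  define sel where "sel \<pi> = (SOME e. e \<in> E \<and> \<pi> = edge_partition V e)" for \<pi>
  define \<alpha> where "\<alpha> \<pi> = edge_partition V' (f ` sel \<pi>)" for \<pi>
  have sel: "sel \<pi> \<in> E \<and> \<pi> = edge_partition V (sel \<pi>)" if "\<pi> \<in> edge_partition V ` E" for \<pi>
    unfolding sel_def by (rule someI_ex) (use that in blast)
  show "asd_le (graph_device V E) (graph_device V' E')"
    unfolding asd_le_def graph_device_def fst_conv snd_conv
  proof (intro exI conjI ballI)
    show "f \<in> V \<rightarrow> V'" using fV by blast
    show "\<alpha> \<in> edge_partition V ` E \<rightarrow> edge_partition V' ` E'"
    proof
      fix \<pi> assume p: "\<pi> \<in> edge_partition V ` E"
      have "sel \<pi> \<in> E" using sel[OF p] by (rule conjunct1)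
      hence "f ` sel \<pi> \<in> E'" by (rule fE)
      thus "\<alpha> \<pi> \<in> edge_partition V' ` E'" unfolding \<alpha>_def by (rule imageI)
    qed
  next
    fix \<pi> assume p: "\<pi> \<in> edge_partition V ` E"
    define e where "e = sel \<pi>"
    have eE: "e \<in> E" and pe: "\<pi> = edge_partition V e" using sel[OF p] e_def by auto
    have eV: "e \<subseteq> V" using edge_sub[OF assms(1) eE] .
    show "refines (pullback (\<alpha> \<pi>) f V) \<pi>"
      unfolding refines_def pullback_def
    proof
      fix B assume "B \<in> (\<lambda>x. {y \<in> V. same_block (\<alpha> \<pi>) (f x) (f y)}) ` V"
      then obtain x where x: "x \<in> V" and Bx: "B = {y \<in> V. same_block (\<alpha> \<pi>) (f x) (f y)}" by blast
      have ap: "\<alpha> \<pi> = edge_partition V' (f ` e)" unfolding \<alpha>_def e_def by simp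
      show "\<exists>C\<in>\<pi>. B \<subseteq> C"
      proof (cases "x \<in> e")
        case True
        have "B \<subseteq> {x}"
        proof
          fix y assume "y \<in> B"
          hence y: "y \<in> V" "same_block (\<alpha> \<pi>) (f x) (f y)" using Bx by auto
          hence "f y = f x" using sb_in_edge True ap by fastforce
          thus "y \<in> {x}" using inj_onD[OF inj _ x y(1)] by auto
        qed
        moreover have "{x} \<in> \<pi>" using pe True unfolding edge_partition_def by auto
        ultimately show ?thesis by blast
      next
        case False
        have "B \<subseteq> V - e"
        proof
          fix y assume "y \<in> B"
          hence y: "y \<in> V" "same_block (\<alpha> \<pi>) (f y) (f x)" using Bx sb_sym by auto
          have "y \<notin> e"
          proof
            assume "y \<in> e"
            hence "f x = f y" using sb_in_edge y ap by fastforce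
            hence "x = y" using inj_onD[OF inj _ x y(1)] by auto
            thus False using False \<open>y \<in> e\<close> by simp
          qed
          thus "y \<in> V - e" using y by simp
        qed
        moreover have "V - e \<in> \<pi>" using pe False x unfolding edge_partition_def by auto
        ultimately show ?thesis by blast
      qed
    qed
  qed
next
  assume "asd_le (graph_device V E) (graph_device V' E')"
  then obtain \<phi> \<alpha> where phi: "\<phi> \<in> V \<rightarrow> V'"
    and alpha: "\<alpha> \<in> edge_partition V ` E \<rightarrow> edge_partition V' ` E'"
    and ref: "\<forall>\<pi>\<in>edge_partition V ` E. refines (pullback (\<alpha> \<pi>) \<phi> V) \<pi>"
    unfolding asd_le_def graph_device_def by auto
  note K = key[OF phi alpha ref]
  have inj: "inj_on \<phi> V"
  proof (rule inj_onI)
    fix x y assume x: "x \<in> V" and y: "y \<in> V" and eq: "\<phi> x = \<phi> y"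
    obtain e where e: "e \<in> E" "x \<in> e" using assms(3) x unfolding no_isolated_def by blast
    have "\<phi> x \<in> V'" using phi x by auto
    obtain e' where e': "\<alpha> (edge_partition V e) = edge_partition V' e'"
      using alpha e(1) by blast
    have "same_block (\<alpha> (edge_partition V e)) (\<phi> x) (\<phi> y)"
      unfolding e' eq[symmetric] by (rule sb_refl) fact
    thus "x = y" using K[OF e x y] by simp
  qed
  have cV: "card V \<ge> 4" using assms(5) by simp
  have finV: "finite V" using assms(1) by (simp add: fin_graph_def)
  have mapE: "\<phi> ` e \<in> E'" if eE: "e \<in> E" for e
  proof -
    obtain u v where uv: "e = {u,v}" "u \<noteq> v" "u \<in> V" "v \<in> V"
      using edge_form[OF assms(1) eE] by blast
    obtain e' where e': "e' \<in> E'" "\<alpha> (edge_partition V e) = edge_partition V' e'"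
      using alpha eE by blast
    obtain a b where ab: "e' = {a,b}" "a \<in> V'" "b \<in> V'"
      using edge_form[OF assms(2) e'(1)] by blast
    have inside: "\<phi> w \<in> e'" if w: "w \<in> e" for w
    proof (rule ccontr)
      assume out: "\<phi> w \<notin> e'"
      have wV: "w \<in> V" using w uv by auto
      have sub: "{y\<in>V. \<phi> y \<notin> e'} \<subseteq> {w}"
      proof
        fix y assume "y \<in> {y\<in>V. \<phi> y \<notin> e'}"
        hence y: "y \<in> V" "\<phi> y \<notin> e'" by auto
        have pw: "\<phi> w \<in> V'" and py: "\<phi> y \<in> V'" using phi wV y(1) by auto
        have "same_block (\<alpha> (edge_partition V e)) (\<phi> w) (\<phi> y)"
          unfolding e'(2) by (rule sb_out[OF pw py out y(2)])
        thus "y \<in> {w}" using K[OF eE w wV y(1)] by simp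
      qed
      have "card {y\<in>V. \<phi> y \<in> e'} \<le> card e'"
        proof (rule card_inj_on_le[where f=\<phi>])
          show "inj_on \<phi> {y\<in>V. \<phi> y \<in> e'}" using inj by (rule inj_on_subset) blast
        qed (auto simp: ab)
      also have "card e' \<le> 2" using ab by (simp add: card_insert_if)
      finally have c2: "card {y\<in>V. \<phi> y \<in> e'} \<le> 2" .
      have "V \<subseteq> {w} \<union> {y\<in>V. \<phi> y \<in> e'}" using sub by auto
      hence "card V \<le> card ({w} \<union> {y\<in>V. \<phi> y \<in> e'})"
        by (rule card_mono[rotated]) (use finV in auto)
      also have "\<dots> \<le> card {w} + card {y\<in>V. \<phi> y \<in> e'}" by (rule card_Un_le)
      finally show False using c2 cV by simp
    qed
    have "\<phi> u \<noteq> \<phi> v" by (metis inj inj_onD uv(2,3,4))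
    moreover have "\<phi> u \<in> e'" "\<phi> v \<in> e'" using inside uv by auto
    ultimately have "\<phi> ` e = e'" using uv ab by auto
    thus ?thesis using e' by simp
  qed
  show "graph_contained V E V' E'"
    unfolding graph_contained_def graph_iso_def
  proof (intro exI conjI)
    show "\<phi> ` V \<subseteq> V'" using phi by auto
    show "(\<lambda>e. \<phi> ` e) ` E \<subseteq> E'" using mapE by auto
    show "bij_betw \<phi> V (\<phi> ` V)" using inj by (simp add: bij_betw_def)
    show "fin_graph (\<phi> ` V) ((\<lambda>e. \<phi> ` e) ` E)"
      unfolding fin_graph_def
    proof (intro conjI ballI)
      show "finite (\<phi> ` V)" using finV by simp
    next
      fix e0 assume "e0 \<in> (\<lambda>e. \<phi> ` e) ` E"
      then obtain e where e: "e \<in> E" "e0 = \<phi> ` e" by blast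
      obtain u v where uv: "e = {u,v}" "u \<noteq> v" "u \<in> V" "v \<in> V"
        using edge_form[OF assms(1) e(1)] by blast
      have "\<phi> u \<noteq> \<phi> v" by (metis inj inj_onD uv(2,3,4))
      thus "\<exists>u v. e0 = {u, v} \<and> u \<noteq> v \<and> u \<in> \<phi> ` V \<and> v \<in> \<phi> ` V"
        using e uv by (intro exI[of _ "\<phi> u"] exI[of _ "\<phi> v"]) auto
    qed
    show "\<forall>u\<in>V. \<forall>v\<in>V. {u, v} \<in> E \<longleftrightarrow> {\<phi> u, \<phi> v} \<in> (\<lambda>e. \<phi> ` e) ` E"
    proof (intro ballI iffI)
      fix u v assume "u \<in> V" "v \<in> V" "{u, v} \<in> E"
      thus "{\<phi> u, \<phi> v} \<in> (\<lambda>e. \<phi> ` e) ` E" by (intro image_eqI[where x="{u,v}"]) auto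
    next
      fix u v assume uv: "u \<in> V" "v \<in> V" "{\<phi> u, \<phi> v} \<in> (\<lambda>e. \<phi> ` e) ` E"
      from uv(3) obtain e where e: "{\<phi> u, \<phi> v} = \<phi> ` e" "e \<in> E" by (rule imageE)
      have eV: "e \<subseteq> V" using edge_sub[OF assms(1) e(2)] .
      have uvV: "{u,v} \<subseteq> V" using uv(1,2) by blast
      have "\<phi> ` {u,v} = \<phi> ` e" using e(1) by simp
      hence "{u,v} = e" using inj_on_image_eq_iff[OF inj uvV eV] by simp
      thus "{u, v} \<in> E" using e by simp
    qed
  qed
qed

end
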